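(* Let $k$ be algebraically closed of characteristic zero and $q\in k^\times$ not a root of unity. If $a,b\in Sp_{2n}(k((t)))$ satisfy $b=c\,a\,\sigma_q(c)^{-1}$ for some $c\in GL_{2n}(k((t)))$, then $b=c'a\sigma_q(c')^{-1}$ for some $c'\in Sp_{2n}(k((t)))$. In other words, the natural map from $q$-conjugacy classes in $Sp_{2n}(k((t)))$ to $q$-conjugacy classes in $GL_{2n}(k((t)))$ is injective. The same holds for $O_n(k((t)))\subseteq GL_n(k((t)))$.
   Context: $\sigma_q(a(t))=a(qt)$, applied entrywise to matrices. $Sp_{2n}(k((t)))$ (resp. $O_n(k((t)))$) is the group of matrices preserving the $k((t))$-bilinear extension of a fixed nondegenerate symplectic form on $k^{2n}$ (resp. symmetric form on $k^n$). $q$-conjugation is $g\mapsto hg\sigma_q(h)^{-1}$. *)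

theory Defs
  imports "HOL-Computational_Algebra.Formal_Laurent_Series" "Jordan_Normal_Form.Determinant"
begin

text \<open>The q-dilation sigma_q on Laurent series: sigma_q(a(t)) = a(q t), i.e. the
  n-th coefficient gets multiplied by q^n (n an integer).\<close>
lift_definition sigma_q :: "'a::field \<Rightarrow> 'a fls \<Rightarrow> 'a fls" is
  "\<lambda>q f n. q powi n * f n"
proof -
  fix q :: 'a and f :: "int \<Rightarrow> 'a"
  assume "\<forall>\<^sub>\<infinity>n. f (- int n) = 0"
  then show "\<forall>\<^sub>\<infinity>n. q powi (- int n) * f (- int n) = 0"
    by (auto elim!: MOST_mono)
qed

definition sigma_mat :: "'a::field \<Rightarrow> 'a fls mat \<Rightarrow> 'a fls mat" where
  "sigma_mat q A = map_mat (sigma_q q) A"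

definition const_mat :: "'a::field mat \<Rightarrow> 'a fls mat" where
  "const_mat J = map_mat fls_const J"

definition GL :: "nat \<Rightarrow> 'a::field fls mat set" where
  "GL m = {c \<in> carrier_mat m m. invertible_mat c}"

definition symplectic_form :: "nat \<Rightarrow> 'a::field mat \<Rightarrow> bool" where
  "symplectic_form n J \<longleftrightarrow> J \<in> carrier_mat (2*n) (2*n) \<and> transpose_mat J = - J
     \<and> (\<forall>i<2*n. J $$ (i,i) = 0) \<and> det J \<noteq> 0"

definition symmetric_form :: "nat \<Rightarrow> 'a::field mat \<Rightarrow> bool" where
  "symmetric_form n S \<longleftrightarrow> S \<in> carrier_mat n n \<and> transpose_mat S = S \<and> det S \<noteq> 0"

text \<open>The group of matrices over k((t)) preserving the k((t))-bilinear extension of the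
  form with Gram matrix B (this is Sp or O depending on B).\<close>
definition isometry_group :: "'a::field mat \<Rightarrow> 'a fls mat set" where
  "isometry_group B = {g \<in> carrier_mat (dim_row B) (dim_row B).
      transpose_mat g * const_mat B * g = const_mat B}"

text \<open>b is q-conjugate to a by an element of G: b = c a sigma_q(c)^(-1) for some c in G
  (d is the inverse of sigma_q(c)).\<close>
definition q_conj_by :: "'a::field \<Rightarrow> 'a fls mat set \<Rightarrow> 'a fls mat \<Rightarrow> 'a fls mat \<Rightarrow> bool" where
  "q_conj_by q G a b \<longleftrightarrow> (\<exists>c\<in>G. \<exists>d \<in> carrier_mat (dim_row a) (dim_row a).
      sigma_mat q c * d = 1\<^sub>m (dim_row a) \<and> d * sigma_mat q c = 1\<^sub>m (dim_row a)
      \<and> b = c * a * d)"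

end

theory Submission
  imports Defs "Jordan_Normal_Form.Char_Poly"
begin


lemma sigma_q_nth[simp]: "fls_nth (sigma_q q f) n = q powi n * fls_nth (f) n"
  by transfer simp

lemma sigma_q_zero[simp]: "sigma_q q 0 = 0"
  by (rule fls_eqI) simp

lemma sigma_q_subdegree:
  assumes q: "(q::'a::field) \<noteq> 0"
  shows "fls_subdegree (sigma_q q f) = fls_subdegree f"
proof (cases "f = 0")
  case True thus ?thesis by simp
next
  case False
  show ?thesis
    by (rule fls_subdegree_eqI) (use False q in auto)
qed

lemma powi_add_q: "(q::'a::field) \<noteq> 0 \<Longrightarrow> q powi (i + j) = q powi i * q powi j"
  by (simp add: power_int_add)

lemma sigma_q_mult:
  assumes q: "(q::'a::field) \<noteq> 0"
  shows "sigma_q q (f * g) = sigma_q q f * sigma_q q g"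
proof (rule fls_eqI)
  fix n
  show "fls_nth (sigma_q q (f * g)) n = fls_nth ((sigma_q q f * sigma_q q g)) n"
    unfolding fls_times_nth(2)[of "sigma_q q f"] fls_times_nth(2)[of f] sigma_q_subdegree[OF q]
    sigma_q_nth sum_distrib_left
  proof (rule sum.cong[OF refl])
    fix i
    have "q powi n = q powi i * q powi (n - i)" using powi_add_q[OF q, of i "n-i"] by simp
    thus "q powi n * (fls_nth (f) i * fls_nth (g) (n - i)) = q powi i * fls_nth (f) i * (q powi (n - i) * fls_nth (g) (n - i))"
      by (simp add: algebra_simps)
  qed
qed

lemma sigma_q_add: "sigma_q (q::'a::field) (f + g) = sigma_q q f + sigma_q q g"
  by (rule fls_eqI) (simp add: algebra_simps)

lemma sigma_q_one: "sigma_q (q::'a::field) 1 = 1"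
  by (rule fls_eqI) simp

lemma sigma_q_hom:
  assumes q: "(q::'a::field) \<noteq> 0"
  shows "comm_ring_hom (sigma_q q)"
  by (unfold_locales; simp add: sigma_q_add sigma_q_one sigma_q_mult[OF q])

lemma sigma_q_const[simp]: "sigma_q q (fls_const c) = fls_const c"
  by (rule fls_eqI) simp

lemma sigma_q_fixed:
  assumes q: "(q::'a::field) \<noteq> 0" and nr: "\<forall>m::nat. m > 0 \<longrightarrow> q ^ m \<noteq> 1"
    and f: "sigma_q q f = f"
  shows "f = fls_const (fls_nth (f) 0)"
proof (rule fls_eqI)
  fix n :: int
  show "fls_nth (f) n = fls_nth (fls_const (fls_nth f 0)) n"
  proof (cases "n = 0")
    case True thus ?thesis by simp
  next
    case False
    from f have e: "q powi n * fls_nth (f) n = fls_nth (f) n" by (metis sigma_q_nth)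
    have "q powi n \<noteq> 1"
    proof (cases "n > 0")
      case True
      then have "q powi n = q ^ nat n" by (simp add: power_int_def)
      thus ?thesis using nr True by auto
    next
      case False2: False
      then have "n < 0" using \<open>n \<noteq> 0\<close> by simp
      then have "q powi n = inverse (q ^ nat (-n))" by (simp add: power_int_def power_inverse)
      moreover have "q ^ nat (-n) \<noteq> 1" using nr \<open>n < 0\<close> by auto
      ultimately show ?thesis by (metis inverse_1 inverse_inverse_eq)
    qed
    with e have "fls_nth (f) n = 0"
      by (metis mult_cancel_right2)
    thus ?thesis using False by simp
  qed
qed

lemma fls_const_hom: "comm_ring_hom (fls_const :: 'a::field \<Rightarrow> 'a fls)"
  by (unfold_locales; (rule fls_eqI)?; simp)



definition mpoly :: "nat \<Rightarrow> 'a::comm_ring_1 poly \<Rightarrow> 'a mat \<Rightarrow> 'a mat" where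
  "mpoly n p A = foldr (\<lambda>c M. c \<cdot>\<^sub>m 1\<^sub>m n + A * M) (coeffs p) (0\<^sub>m n n)"

lemma mpoly_0[simp]: "mpoly n 0 A = 0\<^sub>m n n"
  by (simp add: mpoly_def)

lemma mpoly_pCons:
  assumes A: "A \<in> carrier_mat n n"
  shows "mpoly n (pCons a p) A = a \<cdot>\<^sub>m 1\<^sub>m n + A * mpoly n p A"
proof (cases "p = 0 \<and> a = 0")
  case True
  then show ?thesis using A by (auto simp: mpoly_def)
next
  case False
  then have "coeffs (pCons a p) = a # coeffs p"
    by (auto simp: cCons_def)
  then show ?thesis by (simp add: mpoly_def)
qed

lemma smult_one_mat[simp]: "(1::'a::semiring_1) \<cdot>\<^sub>m A = A"
  by (rule eq_matI) auto

lemma smult_zero_left_mat[simp]: "(0::'a::semiring_1) \<cdot>\<^sub>m A = 0\<^sub>m (dim_row A) (dim_col A)"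
  by (rule eq_matI) auto

lemma smult_smult_mat: "(a::'a::semiring_1) \<cdot>\<^sub>m (b \<cdot>\<^sub>m A) = (a * b) \<cdot>\<^sub>m A"
  by (rule eq_matI) (auto simp: mult.assoc)

lemma zero_add_dim_mat[simp]: "dim_row X = nr \<Longrightarrow> dim_col X = nc \<Longrightarrow> 0\<^sub>m nr nc + X = (X::'a::monoid_add mat)"
  by (rule eq_matI) auto

lemma add_zero_dim_mat[simp]: "dim_row X = nr \<Longrightarrow> dim_col X = nc \<Longrightarrow> X + 0\<^sub>m nr nc = (X::'a::monoid_add mat)"
  by (rule eq_matI) auto

lemma rearr_mat: "X \<in> carrier_mat n n \<Longrightarrow> Y \<in> carrier_mat n n \<Longrightarrow>
   ((a::'a::comm_ring_1) + b) \<cdot>\<^sub>m 1\<^sub>m n + (X + Y) = (a \<cdot>\<^sub>m 1\<^sub>m n + X) + (b \<cdot>\<^sub>m 1\<^sub>m n + Y)"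
  by (rule eq_matI) (auto simp: algebra_simps)

lemma mpoly_carrier[simp]:
  assumes A: "A \<in> carrier_mat n n"
  shows "mpoly n p A \<in> carrier_mat n n"
  by (induct p rule: pCons_induct) (auto simp: mpoly_pCons[OF A] A intro!: add_carrier_mat mult_carrier_mat)

lemma mpoly_dim[simp]:
  assumes A: "A \<in> carrier_mat n n"
  shows "dim_row (mpoly n p A) = n" "dim_col (mpoly n p A) = n"
  using mpoly_carrier[OF A, of p] by auto

lemma mpoly_add:
  assumes A: "A \<in> carrier_mat n n"
  shows "mpoly n (p + q) A = mpoly n p A + mpoly n q A"
proof (induct p arbitrary: q rule: pCons_induct)
  case 0 thus ?case using A by simp
next
  case (pCons a p)
  obtain b q' where q: "q = pCons b q'" by (cases q) auto
  have "mpoly n (pCons a p + q) A = (a + b) \<cdot>\<^sub>m 1\<^sub>m n + A * (mpoly n p A + mpoly n q' A)"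
    using pCons by (simp add: q mpoly_pCons[OF A])
  also have "\<dots> = (a \<cdot>\<^sub>m 1\<^sub>m n + A * mpoly n p A) + (b \<cdot>\<^sub>m 1\<^sub>m n + A * mpoly n q' A)"
    unfolding mult_add_distrib_mat[OF A mpoly_carrier[OF A] mpoly_carrier[OF A]]
    by (rule rearr_mat) (use A in auto)
  also have "\<dots> = mpoly n (pCons a p) A + mpoly n q A"
    by (simp add: q mpoly_pCons[OF A])
  finally show ?case .
qed

lemma mpoly_smult:
  assumes A: "A \<in> carrier_mat n n"
  shows "mpoly n (Polynomial.smult c p) A = c \<cdot>\<^sub>m mpoly n p A"
proof (induct p rule: pCons_induct)
  case 0 thus ?case by simp
next
  case (pCons a p)
  show ?case using pCons A
    by (simp add: mpoly_pCons[OF A] add_smult_distrib_left_mat[of _ n n] mult_smult_distrib[OF A mpoly_carrier[OF A]]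
      smult_smult_mat)
qed

lemma mpoly_mult:
  assumes A: "A \<in> carrier_mat n n"
  shows "mpoly n (p * q) A = mpoly n p A * mpoly n q A"
proof (induct p rule: pCons_induct)
  case 0 thus ?case using A by (simp add: left_mult_zero_mat[of _ n n])
next
  case (pCons a p)
  have "mpoly n (pCons a p * q) A = mpoly n (Polynomial.smult a q) A + mpoly n (pCons 0 (p * q)) A"
    by (simp add: mpoly_add[OF A])
  also have "\<dots> = a \<cdot>\<^sub>m mpoly n q A + A * (mpoly n p A * mpoly n q A)"
    using pCons A by (simp add: mpoly_smult[OF A] mpoly_pCons[OF A])
  also have "\<dots> = (a \<cdot>\<^sub>m 1\<^sub>m n + A * mpoly n p A) * mpoly n q A"
    using A by (simp add: add_mult_distrib_mat[OF smult_carrier_mat[OF one_carrier_mat] mult_carrier_mat[OF A mpoly_carrier[OF A]] mpoly_carrier[OF A]]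
      mult_smult_assoc_mat[OF one_carrier_mat mpoly_carrier[OF A]] assoc_mult_mat[OF A mpoly_carrier[OF A] mpoly_carrier[OF A]])
  also have "\<dots> = mpoly n (pCons a p) A * mpoly n q A"
    by (simp add: mpoly_pCons[OF A])
  finally show ?case .
qed

lemma mpoly_const:
  assumes A: "A \<in> carrier_mat n n"
  shows "mpoly n [:c:] A = c \<cdot>\<^sub>m 1\<^sub>m n"
  using A by (simp add: mpoly_pCons[OF A])

lemma mpoly_X:
  assumes A: "A \<in> carrier_mat n n"
  shows "mpoly n [:0,1:] A = A"
  using A by (simp add: mpoly_pCons[OF A])

lemma mpoly_comm:
  assumes A: "A \<in> carrier_mat n n"
  shows "mpoly n p A * A = A * mpoly n p A"
proof (induct p rule: pCons_induct)
  case 0 thus ?case using A by simp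
next
  case (pCons a p)
  have "(a \<cdot>\<^sub>m 1\<^sub>m n + A * mpoly n p A) * A = a \<cdot>\<^sub>m A + A * (mpoly n p A * A)"
    using A by (simp add: add_mult_distrib_mat[of _ n n] mult_smult_assoc_mat[of _ n n]
      assoc_mult_mat[OF A mpoly_carrier[OF A] A])
  also have "\<dots> = A * (a \<cdot>\<^sub>m 1\<^sub>m n + A * mpoly n p A)"
    using A pCons by (simp add: mult_add_distrib_mat[OF A smult_carrier_mat[OF one_carrier_mat] mult_carrier_mat[OF A mpoly_carrier[OF A]]] mult_smult_distrib[OF A one_carrier_mat]
     assoc_mult_mat[OF A A mpoly_carrier[OF A]] )
  finally show ?case by (simp add: mpoly_pCons[OF A])
qed



lemma mult_carrier_sq[simp]: "X \<in> carrier_mat n n \<Longrightarrow> Y \<in> carrier_mat n n \<Longrightarrow> X * Y \<in> carrier_mat n n"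
  by (rule mult_carrier_mat)

lemma pow_carrier_sq[simp]: "X \<in> carrier_mat n n \<Longrightarrow> X ^\<^sub>m i \<in> carrier_mat n n"
  by (rule pow_carrier_mat)

lemma add4_mat: "X \<in> carrier_mat n n \<Longrightarrow> Y \<in> carrier_mat n n \<Longrightarrow> Z \<in> carrier_mat n n \<Longrightarrow> W \<in> carrier_mat n n
  \<Longrightarrow> (X + Y) + (Z + (W :: 'a::comm_monoid_add mat)) = (X + Z) + (Y + W)"
  by (rule eq_matI) (auto simp: algebra_simps)

lemma neg_add_mat: "X \<in> carrier_mat n n \<Longrightarrow> Y \<in> carrier_mat n n
  \<Longrightarrow> - X + - Y = - (X + (Y :: 'a::comm_ring_1 mat))"
  by (rule eq_matI) (auto simp: algebra_simps)

fun msum :: "nat \<Rightarrow> (nat \<Rightarrow> 'a::semiring_1 mat) \<Rightarrow> nat \<Rightarrow> 'a mat" where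
  "msum n f 0 = 0\<^sub>m n n"
| "msum n f (Suc D) = msum n f D + f D"

lemma msum_carrier[simp]:
  "(\<And>i. f i \<in> carrier_mat n n) \<Longrightarrow> msum n f D \<in> carrier_mat n n"
  by (induct D) auto

lemma msum_shift:
  assumes f: "\<And>i. f i \<in> carrier_mat n n"
  shows "msum n f (Suc D) = f 0 + msum n (\<lambda>i. f (Suc i)) D"
proof (induct D)
  case 0 thus ?case using f[of 0] by simp
next
  case (Suc D)
  have "msum n f (Suc (Suc D)) = (f 0 + msum n (\<lambda>i. f (Suc i)) D) + f (Suc D)"
    using Suc by simp
  also have "\<dots> = f 0 + (msum n (\<lambda>i. f (Suc i)) D + f (Suc D))"
    by (rule assoc_add_mat[of _ n n]) (use f in auto)
  finally show ?case by simp
qed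

lemma msum_mult_left:
  assumes A: "A \<in> carrier_mat n n" and f: "\<And>i. f i \<in> carrier_mat n n"
  shows "A * msum n f D = msum n (\<lambda>i. A * f i) D"
proof (induct D)
  case 0 thus ?case using A by simp
next
  case (Suc D)
  show ?case using Suc
    by (simp add: mult_add_distrib_mat[OF A msum_carrier[OF f] f])
qed

lemma msum_add:
  assumes f: "\<And>i. f i \<in> carrier_mat n n" and g: "\<And>i. g i \<in> carrier_mat n n"
  shows "msum n (\<lambda>i. f i + g i) D = msum n f D + msum n g D"
proof (induct D)
  case 0 thus ?case by simp
next
  case (Suc D)
  have "msum n (\<lambda>i. f i + g i) (Suc D) = (msum n f D + msum n g D) + (f D + g D)"
    using Suc by simp
  also have "\<dots> = (msum n f D + f D) + (msum n g D + g D)"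
    by (rule add4_mat[OF msum_carrier[where f=f and D=D, OF f] msum_carrier[where f=g and D=D, OF g] f[of D] g[of D]])
  finally show ?case by simp
qed

lemma msum_uminus:
  assumes f: "\<And>i. (f i :: 'a::comm_ring_1 mat) \<in> carrier_mat n n"
  shows "msum n (\<lambda>i. - f i) D = - msum n f D"
proof (induct D)
  case 0 thus ?case by (rule eq_matI) auto
next
  case (Suc D)
  have "msum n (\<lambda>i. - f i) (Suc D) = - msum n f D + - f D" using Suc by simp
  also have "\<dots> = - (msum n f D + f D)"
    by (rule neg_add_mat[OF msum_carrier[where f=f and D=D, OF f] f[of D]])
  finally show ?case by simp
qed

lemma msum_cong:
  "(\<And>i. i < D \<Longrightarrow> f i = g i) \<Longrightarrow> msum n f D = msum n g D"
  by (induct D) auto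

lemma msum_zero:
  "(\<And>i. i < D \<Longrightarrow> f i = 0\<^sub>m n n) \<Longrightarrow> msum n f D = 0\<^sub>m n n"
  by (induct D) auto

lemma pow_comm_mat:
  assumes A: "A \<in> carrier_mat n n"
  shows "A * A ^\<^sub>m i = A ^\<^sub>m (Suc i)"
proof (induct i)
  case 0 thus ?case using A by simp
next
  case (Suc i)
  have "A * A ^\<^sub>m Suc i = (A * A ^\<^sub>m i) * A"
    using A by (simp add: assoc_mult_mat[OF A pow_carrier_mat[OF A] A])
  thus ?case using Suc by simp
qed

lemma msum_mpoly:
  assumes A: "A \<in> carrier_mat n n"
  shows "(\<forall>i\<ge>D. coeff p i = 0) \<Longrightarrow> mpoly n p A = msum n (\<lambda>i. coeff p i \<cdot>\<^sub>m A ^\<^sub>m i) D"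
proof (induct p arbitrary: D rule: pCons_induct)
  case 0
  show ?case by (simp, rule msum_zero[symmetric]) (use A in auto)
next
  case (pCons a p)
  show ?case
  proof (cases D)
    case 0
    with pCons have "\<forall>i. coeff (pCons a p) i = 0" by auto
    hence "pCons a p = 0" by (simp add: poly_eq_iff)
    with pCons show ?thesis by simp
  next
    case (Suc D')
    have cp: "\<forall>i\<ge>D'. coeff p i = 0" using pCons(3) Suc by auto
    have "mpoly n (pCons a p) A = a \<cdot>\<^sub>m 1\<^sub>m n + A * msum n (\<lambda>i. coeff p i \<cdot>\<^sub>m A ^\<^sub>m i) D'"
      using pCons(2)[OF cp] by (simp add: mpoly_pCons[OF A])
    also have "A * msum n (\<lambda>i. coeff p i \<cdot>\<^sub>m A ^\<^sub>m i) D' = msum n (\<lambda>i. coeff p i \<cdot>\<^sub>m A ^\<^sub>m Suc i) D'"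
      by (subst msum_mult_left[OF A]) (use A in \<open>auto simp: mult_smult_distrib[OF A pow_carrier_mat[OF A]] pow_comm_mat[OF A]
         simp del: pow_mat.simps\<close>)
    also have "a \<cdot>\<^sub>m 1\<^sub>m n + msum n (\<lambda>i. coeff p i \<cdot>\<^sub>m A ^\<^sub>m Suc i) D' =
       msum n (\<lambda>i. coeff (pCons a p) i \<cdot>\<^sub>m A ^\<^sub>m i) D"
      unfolding Suc by (subst msum_shift) (use A in \<open>auto simp del: pow_mat.simps(2)\<close>)
    finally show ?thesis .
  qed
qed

definition coeffm :: "'a::zero poly mat \<Rightarrow> nat \<Rightarrow> 'a mat" where
  "coeffm P i = map_mat (\<lambda>p. coeff p i) P"

definition lev :: "nat \<Rightarrow> 'a::comm_ring_1 mat \<Rightarrow> 'a poly mat \<Rightarrow> nat \<Rightarrow> 'a mat" where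
  "lev n A P D = msum n (\<lambda>i. A ^\<^sub>m i * coeffm P i) D"

lemma coeffm_carrier[simp]: "P \<in> carrier_mat n m \<Longrightarrow> coeffm P i \<in> carrier_mat n m"
  by (simp add: coeffm_def)

lemma lev_carrier[simp]: "A \<in> carrier_mat n n \<Longrightarrow> P \<in> carrier_mat n n \<Longrightarrow> lev n A P D \<in> carrier_mat n n"
  unfolding lev_def by (rule msum_carrier) (auto intro: mult_carrier_mat)

lemma lev_add:
  assumes A: "A \<in> carrier_mat n n" and P: "P \<in> carrier_mat n n" and Q: "Q \<in> carrier_mat n n"
  shows "lev n A (P + Q) D = lev n A P D + lev n A Q D"
proof -
  have "coeffm (P + Q) i = coeffm P i + coeffm Q i" for i
    by (rule eq_matI) (use P Q in \<open>auto simp: coeffm_def\<close>)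
  hence "A ^\<^sub>m i * coeffm (P + Q) i = A ^\<^sub>m i * coeffm P i + A ^\<^sub>m i * coeffm Q i" for i
    using mult_add_distrib_mat[OF pow_carrier_mat[OF A] coeffm_carrier[OF P] coeffm_carrier[OF Q]] by simp
  thus ?thesis unfolding lev_def
    by (simp add: msum_add[of _ n, OF mult_carrier_mat[OF pow_carrier_mat[OF A] coeffm_carrier[OF P]]
       mult_carrier_mat[OF pow_carrier_mat[OF A] coeffm_carrier[OF Q]]])
qed

lemma lev_X:
  assumes A: "A \<in> carrier_mat n n" and P: "P \<in> carrier_mat n n"
  shows "lev n A ([:0,1:] \<cdot>\<^sub>m P) (Suc D) = A * lev n A P D"
proof -
  have c0: "coeffm ([:0,1:] \<cdot>\<^sub>m P) 0 = 0\<^sub>m n n"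
    by (rule eq_matI) (use P in \<open>auto simp: coeffm_def\<close>)
  have cS: "coeffm ([:0,1:] \<cdot>\<^sub>m P) (Suc i) = coeffm P i" for i
    by (rule eq_matI) (use P in \<open>auto simp: coeffm_def\<close>)
  have "lev n A ([:0,1:] \<cdot>\<^sub>m P) (Suc D) = A ^\<^sub>m 0 * coeffm ([:0,1:] \<cdot>\<^sub>m P) 0 +
     msum n (\<lambda>i. A ^\<^sub>m Suc i * coeffm ([:0,1:] \<cdot>\<^sub>m P) (Suc i)) D"
    unfolding lev_def by (rule msum_shift) (use A P in \<open>auto intro: mult_carrier_mat\<close>)
  also have "\<dots> = msum n (\<lambda>i. A * (A ^\<^sub>m i * coeffm P i)) D"
  proof -
    have m: "msum n (\<lambda>i. A ^\<^sub>m Suc i * coeffm P i) D \<in> carrier_mat n n"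
      by (rule msum_carrier) (use A P in auto)
    have "A ^\<^sub>m Suc i * coeffm P i = A * (A ^\<^sub>m i * coeffm P i)" for i
      by (simp add: pow_comm_mat[OF A, symmetric] assoc_mult_mat[OF A pow_carrier_mat[OF A] coeffm_carrier[OF P]]
         del: pow_mat.simps)
    hence e: "msum n (\<lambda>i. A ^\<^sub>m Suc i * coeffm P i) D = msum n (\<lambda>i. A * (A ^\<^sub>m i * coeffm P i)) D"
      by (intro msum_cong) (simp del: pow_mat.simps)
    have z: "A ^\<^sub>m 0 * 0\<^sub>m n n = 0\<^sub>m n n" using A by simp
    have "0\<^sub>m n n + msum n (\<lambda>i. A ^\<^sub>m Suc i * coeffm P i) D = msum n (\<lambda>i. A ^\<^sub>m Suc i * coeffm P i) D"
      by (rule zero_add_dim_mat) (use m in auto)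
    then show ?thesis unfolding c0 cS z e .
  qed
  also have "\<dots> = A * lev n A P D"
    unfolding lev_def by (rule msum_mult_left[symmetric]) (use A P in auto)
  finally show ?thesis .
qed

lemma lev_const:
  assumes A: "A \<in> carrier_mat n n" and P: "P \<in> carrier_mat n n"
  shows "lev n A (map_mat (\<lambda>a. [:-a:]) A * P) D = - (A * lev n A P D)"
proof -
  have c: "coeffm (map_mat (\<lambda>a. [:-a:]) A * P) i = - (A * coeffm P i)" for i
  proof (rule eq_matI)
    fix j l assume j: "j < dim_row (- (A * coeffm P i))" and l: "l < dim_col (- (A * coeffm P i))"
    show "coeffm (map_mat (\<lambda>a. [:-a:]) A * P) i $$ (j, l) = (- (A * coeffm P i)) $$ (j, l)"
      using j l A P by (auto simp: coeffm_def scalar_prod_def coeff_sum sum_negf)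
  qed (use A P in \<open>auto simp: coeffm_def\<close>)
  have "A ^\<^sub>m i * coeffm (map_mat (\<lambda>a. [:-a:]) A * P) i = - (A * (A ^\<^sub>m i * coeffm P i))" for i
    unfolding c using A
    by (simp add: pow_comm_mat[OF A] assoc_mult_mat[OF A pow_carrier_mat[OF A] coeffm_carrier[OF P], symmetric]
        assoc_mult_mat[OF pow_carrier_mat[OF A] A coeffm_carrier[OF P], symmetric])
  hence "lev n A (map_mat (\<lambda>a. [:-a:]) A * P) D = msum n (\<lambda>i. - (A * (A ^\<^sub>m i * coeffm P i))) D"
    unfolding lev_def by simp
  also have "\<dots> = - msum n (\<lambda>i. A * (A ^\<^sub>m i * coeffm P i)) D"
    by (rule msum_uminus) (use A P in auto)
  also have "\<dots> = - (A * lev n A P D)"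
    unfolding lev_def by (subst msum_mult_left[OF A]) (use A P in auto)
  finally show ?thesis .
qed



lemma add_uminus_r_mat: "(X :: 'a :: group_add mat) \<in> carrier_mat n n \<Longrightarrow> X + - X = 0\<^sub>m n n"
  by (intro eq_matI) auto

lemma cayley_hamilton:
  assumes A: "(A :: 'a::comm_ring_1 mat) \<in> carrier_mat n n"
  shows "mpoly n (char_poly A) A = 0\<^sub>m n n"
proof -
  define M where "M = char_poly_matrix A"
  define Adj where "Adj = adj_mat M"
  have M: "M \<in> carrier_mat n n" unfolding M_def using A by simp
  have Adj: "Adj \<in> carrier_mat n n" unfolding Adj_def using adj_mat(1)[OF M] .
  have MAdj: "M * Adj = char_poly A \<cdot>\<^sub>m 1\<^sub>m n"
    unfolding Adj_def M_def char_poly_def using adj_mat(2)[OF M[unfolded M_def]] .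
  define D where "D = n + (\<Sum>j<n. \<Sum>l<n. Suc (degree (Adj $$ (j,l))))"
  have degAdj: "coeff (Adj $$ (j,l)) i = 0" if "j < n" "l < n" "i \<ge> D" for i j l
  proof -
    have "Suc (degree (Adj $$ (j,l))) \<le> (\<Sum>l<n. Suc (degree (Adj $$ (j,l))))"
      by (rule member_le_sum) (use that in auto)
    also have "\<dots> \<le> (\<Sum>j<n. \<Sum>l<n. Suc (degree (Adj $$ (j,l))))"
      by (rule member_le_sum[where f = "\<lambda>j. \<Sum>l<n. Suc (degree (Adj $$ (j,l)))"]) (use that in auto)
    finally have "degree (Adj $$ (j,l)) < i" using that unfolding D_def by simp
    thus ?thesis by (rule coeff_eq_0)
  qed
  have degchi: "coeff (char_poly A) i = 0" if "i \<ge> Suc D" for i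
  proof -
    have "degree (char_poly A) = n" using degree_monic_char_poly[OF A] by simp
    hence "degree (char_poly A) < i" using that unfolding D_def by simp
    thus ?thesis by (rule coeff_eq_0)
  qed
  have cD: "coeffm Adj D = 0\<^sub>m n n"
    by (rule eq_matI) (use Adj degAdj in \<open>auto simp: coeffm_def\<close>)
  have levS: "lev n A Adj (Suc D) = lev n A Adj D"
  proof -
    have "lev n A Adj (Suc D) = lev n A Adj D + A ^\<^sub>m D * 0\<^sub>m n n"
      unfolding lev_def using cD by simp
    also have "\<dots> = lev n A Adj D"
      using A Adj by simp
    finally show ?thesis .
  qed
  have Mdef: "M = [:0,1:] \<cdot>\<^sub>m 1\<^sub>m n + map_mat (\<lambda>a. [:-a:]) A"
    unfolding M_def char_poly_matrix_def using A by simp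
  have "M * Adj = [:0,1:] \<cdot>\<^sub>m Adj + map_mat (\<lambda>a. [:-a:]) A * Adj"
    unfolding Mdef using A Adj
    by (simp add: add_mult_distrib_mat[OF smult_carrier_mat[OF one_carrier_mat] map_carrier_mat[THEN iffD2, OF A] Adj]
       mult_smult_assoc_mat[OF one_carrier_mat Adj])
  hence "lev n A (M * Adj) (Suc D) = A * lev n A Adj D + - (A * lev n A Adj D)"
    using A Adj by (simp add: lev_add lev_X lev_const levS)
  also have "\<dots> = 0\<^sub>m n n" by (rule add_uminus_r_mat) (use A Adj in simp)
  finally have lz: "lev n A (M * Adj) (Suc D) = 0\<^sub>m n n" .
  have "lev n A (M * Adj) (Suc D) = msum n (\<lambda>i. coeff (char_poly A) i \<cdot>\<^sub>m A ^\<^sub>m i) (Suc D)"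
    unfolding MAdj lev_def
  proof (rule msum_cong)
    fix i
    have "coeffm (char_poly A \<cdot>\<^sub>m 1\<^sub>m n) i = coeff (char_poly A) i \<cdot>\<^sub>m 1\<^sub>m n"
      by (rule eq_matI) (auto simp: coeffm_def)
    thus "A ^\<^sub>m i * coeffm (char_poly A \<cdot>\<^sub>m 1\<^sub>m n) i = coeff (char_poly A) i \<cdot>\<^sub>m A ^\<^sub>m i"
      using A by (simp add: mult_smult_distrib[OF pow_carrier_mat[OF A] one_carrier_mat] del: pow_mat.simps)
  qed
  also have "\<dots> = mpoly n (char_poly A) A"
    by (rule msum_mpoly[OF A, symmetric]) (use degchi in auto)
  finally show ?thesis using lz by simp
qed



lemma poly_sqrt:
  fixes p :: "'k::{alg_closed_field, field_char_0} poly"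
  assumes "poly p 0 \<noteq> 0"
  shows "\<exists>r. p dvd r^2 - [:0,1:]"
  using assms
proof (induct "degree p" arbitrary: p rule: less_induct)
  case less
  have p0: "p \<noteq> 0" using less(2) by auto
  show ?case
  proof (cases "degree p = 0")
    case True
    hence "is_unit p" using p0 by (simp add: is_unit_iff_degree)
    thus ?thesis using unit_imp_dvd by blast
  next
    case False
    then obtain l where l: "poly p l = 0" using alg_closed_imp_poly_has_root by blast
    then obtain p' where pp: "p = [:-l,1:] * p'" by (metis dvdE poly_eq_0_iff_dvd)
    have l0: "l \<noteq> 0" using l less(2) by auto
    have p'0: "p' \<noteq> 0" using p0 pp by auto
    have deg: "degree p' < degree p" unfolding pp by (subst degree_mult_eq) (use p'0 in auto)
    have p'z: "poly p' 0 \<noteq> 0" using less(2) pp by simp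
    obtain r' where "p' dvd r'^2 - [:0,1:]" using less(1)[OF deg p'z] by blast
    then obtain h where h: "r'^2 - [:0,1:] = p' * h" by (auto elim: dvdE)
    have hl: "poly r' l ^ 2 - l = poly p' l * poly h l"
      using arg_cong[OF h, of "\<lambda>q. poly q l"] by simp
    obtain s where s: "poly h l + 2 * s * poly r' l + s^2 * poly p' l = 0"
    proof (cases "poly p' l = 0")
      case True
      hence "poly r' l \<noteq> 0" using hl l0 by auto
      hence "poly h l + 2 * (- poly h l / (2 * poly r' l)) * poly r' l + (- poly h l / (2 * poly r' l))^2 * poly p' l = 0"
        using True by (simp add: field_simps)
      thus ?thesis by (rule that)
    next
      case False
      define Q where "Q = [:poly h l, 2 * poly r' l, poly p' l:]"
      have "degree Q = 2" using False unfolding Q_def by simp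
      then obtain s where "poly Q s = 0" using alg_closed_imp_poly_has_root[of Q] by auto
      hence "poly h l + 2 * s * poly r' l + s^2 * poly p' l = 0"
        unfolding Q_def by (simp add: algebra_simps power2_eq_square)
      thus ?thesis by (rule that)
    qed
    define g where "g = h + 2 * Polynomial.smult s r' + Polynomial.smult (s^2) p'"
    have "poly g l = 0" using s unfolding g_def by (simp add: algebra_simps)
    then obtain g' where g': "g = [:-l,1:] * g'" by (metis dvdE poly_eq_0_iff_dvd)
    have "(r' + Polynomial.smult s p')^2 - [:0,1:] = p' * g"
    proof -
      have "(r' + Polynomial.smult s p')^2 - [:0,1:] = (r'^2 - [:0,1:]) + 2 * Polynomial.smult s (r' * p') + Polynomial.smult (s^2) (p' * p')"
        by (simp add: power2_eq_square algebra_simps smult_add_right)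
      also have "\<dots> = p' * g" unfolding h g_def by (simp add: algebra_simps)
      finally show ?thesis .
    qed
    moreover have "p' * g = p * g'" unfolding pp g' by (simp only: ac_simps)
    ultimately have "(r' + Polynomial.smult s p')^2 - [:0,1:] = p * g'" by simp
    thus ?thesis by (metis dvdI)
  qed
qed



lemma sig_carrier[simp]: "(sigma_mat q A \<in> carrier_mat nr nc) = (A \<in> carrier_mat nr nc)"
  by (simp add: sigma_mat_def)

lemma sig_mult:
  assumes q: "q \<noteq> 0" and A: "A \<in> carrier_mat nr n" and B: "B \<in> carrier_mat n nc"
  shows "sigma_mat q (A * B) = sigma_mat q A * sigma_mat q B"
proof -
  interpret comm_ring_hom "sigma_q q" by (rule sigma_q_hom[OF q])
  show ?thesis unfolding sigma_mat_def by (rule mat_hom_mult[OF A B])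
qed

lemma sig_one[simp]: "sigma_mat q (1\<^sub>m n) = 1\<^sub>m n"
  by (rule eq_matI) (auto simp: sigma_mat_def sigma_q_one)

lemma sig_const[simp]: "sigma_mat q (const_mat B) = const_mat B"
  by (rule eq_matI) (auto simp: sigma_mat_def const_mat_def)

lemma sig_transpose: "sigma_mat q (transpose_mat A) = transpose_mat (sigma_mat q A)"
  by (rule eq_matI) (auto simp: sigma_mat_def)

lemma sig_add: "A \<in> carrier_mat nr nc \<Longrightarrow> B \<in> carrier_mat nr nc \<Longrightarrow>
   sigma_mat q (A + B) = sigma_mat q A + sigma_mat q B"
  by (rule eq_matI) (auto simp: sigma_mat_def sigma_q_add)

lemma sig_smult_const: "sigma_mat (q::'a::field) (fls_const c \<cdot>\<^sub>m A) = fls_const c \<cdot>\<^sub>m sigma_mat q A"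
  by (rule eq_matI) (auto simp: sigma_mat_def intro!: fls_eqI)

lemma cancel_mat: "P * Q = 1\<^sub>m n \<Longrightarrow> P \<in> carrier_mat n n \<Longrightarrow> Q \<in> carrier_mat n n \<Longrightarrow>
   Z \<in> carrier_mat n m \<Longrightarrow> P * (Q * (Z :: 'a::semiring_1 mat)) = Z"
  by (simp add: assoc_mult_mat[symmetric, of P n n Q n Z m] left_mult_one_mat)

lemma inv_exists:
  assumes A: "(A :: 'a::field mat) \<in> carrier_mat n n" and d: "det A \<noteq> 0"
  shows "\<exists>Ai \<in> carrier_mat n n. A * Ai = 1\<^sub>m n \<and> Ai * A = 1\<^sub>m n"
proof -
  define Ai where "Ai = inverse (det A) \<cdot>\<^sub>m adj_mat A"
  have Ai: "Ai \<in> carrier_mat n n" unfolding Ai_def using adj_mat(1)[OF A] by simp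
  have "A * Ai = 1\<^sub>m n" unfolding Ai_def
    using d by (simp add: mult_smult_distrib[OF A adj_mat(1)[OF A]] adj_mat(2)[OF A] smult_smult_mat)
  moreover from this have "Ai * A = 1\<^sub>m n" by (rule mat_mult_left_right_inverse[OF A Ai])
  ultimately show ?thesis using Ai by blast
qed

lemma mpoly_pow:
  assumes A: "A \<in> carrier_mat n n"
  shows "mpoly n (p ^ m) A = mpoly n p A ^\<^sub>m m"
proof (induct m)
  case 0
  have "mpoly n 1 A = 1 \<cdot>\<^sub>m 1\<^sub>m n" using mpoly_const[OF A, of 1] by (simp add: one_pCons)
  thus ?case using A by simp
next
  case (Suc m)
  show ?case using Suc pow_comm_mat[OF mpoly_carrier[OF A], of p m] by (simp add: mpoly_mult[OF A])
qed



lemma smult_one_left_mat: "X \<in> carrier_mat n m \<Longrightarrow> (c \<cdot>\<^sub>m 1\<^sub>m n) * X = (c::'a::comm_semiring_1) \<cdot>\<^sub>m X"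
  by (simp add: mult_smult_assoc_mat[of "1\<^sub>m n" n n X m] left_mult_one_mat)

lemma smult_one_right_mat: "X \<in> carrier_mat m n \<Longrightarrow> X * (c \<cdot>\<^sub>m 1\<^sub>m n) = (c::'a::comm_semiring_1) \<cdot>\<^sub>m X"
  by (simp add: mult_smult_distrib[of X m n "1\<^sub>m n" n] right_mult_one_mat)

lemma transpose_smult_mat[simp]: "transpose_mat (c \<cdot>\<^sub>m A) = c \<cdot>\<^sub>m transpose_mat A"
  by (rule eq_matI) auto

lemma sig_zero[simp]: "sigma_mat q (0\<^sub>m n m) = 0\<^sub>m n m"
  by (rule eq_matI) (auto simp: sigma_mat_def)

lemma ypoly_sigma:
  fixes u a :: "'k::field fls mat"
  assumes q: "q \<noteq> 0" and u: "u \<in> carrier_mat N N" and a: "a \<in> carrier_mat N N"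
    and ua: "u * a = a * sigma_mat q u"
  shows "mpoly N (map_poly fls_const p) u * a = a * sigma_mat q (mpoly N (map_poly fls_const p) u)"
proof (induct p rule: pCons_induct)
  case 0 thus ?case using a by simp
next
  case (pCons c p)
  define Y where "Y = mpoly N (map_poly fls_const p) u"
  have Y: "Y \<in> carrier_mat N N" unfolding Y_def using u by simp
  have IH: "Y * a = a * sigma_mat q Y" using pCons(2) unfolding Y_def .
  have e: "mpoly N (map_poly fls_const (pCons c p)) u = fls_const c \<cdot>\<^sub>m 1\<^sub>m N + u * Y"
    unfolding Y_def using pCons(1) by (subst map_poly_pCons) (simp_all add: mpoly_pCons[OF u])
  have sY: "sigma_mat q Y \<in> carrier_mat N N" "sigma_mat q u \<in> carrier_mat N N" using Y u by auto
  have "(fls_const c \<cdot>\<^sub>m 1\<^sub>m N + u * Y) * a = fls_const c \<cdot>\<^sub>m a + u * (Y * a)"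
    using u Y a by (simp add: add_mult_distrib_mat[of _ N N _ _ N] smult_one_left_mat)
  also have "u * (Y * a) = a * (sigma_mat q u * sigma_mat q Y)"
    unfolding IH using u a sY
    by (simp add: assoc_mult_mat[symmetric, of u N N a N _ N] ua)
  also have "fls_const c \<cdot>\<^sub>m a + a * (sigma_mat q u * sigma_mat q Y) =
     a * sigma_mat q (fls_const c \<cdot>\<^sub>m 1\<^sub>m N + u * Y)"
    using u Y a sY
    by (simp add: sig_add[of _ N N] sig_smult_const sig_mult[OF q u Y] mult_add_distrib_mat[of a N N _ N]
      smult_one_right_mat)
  finally show ?case unfolding e .
qed

lemma ypoly_transpose:
  fixes u B :: "'a::comm_ring_1 mat"
  assumes u: "u \<in> carrier_mat N N" and B: "B \<in> carrier_mat N N"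
    and uB: "transpose_mat u * B = B * u"
  shows "transpose_mat (mpoly N p u) * B = B * mpoly N p u"
proof (induct p rule: pCons_induct)
  case 0 thus ?case using B by simp
next
  case (pCons c p)
  define Y where "Y = mpoly N p u"
  have Y: "Y \<in> carrier_mat N N" unfolding Y_def using u by simp
  have IH: "transpose_mat Y * B = B * Y" using pCons(2) unfolding Y_def .
  have com: "Y * u = u * Y" unfolding Y_def by (rule mpoly_comm[OF u])
  have "transpose_mat (c \<cdot>\<^sub>m 1\<^sub>m N + u * Y) = c \<cdot>\<^sub>m 1\<^sub>m N + transpose_mat Y * transpose_mat u"
    using u Y by (simp add: transpose_add[of _ N N] transpose_mult[of u N N Y N])
  hence "transpose_mat (c \<cdot>\<^sub>m 1\<^sub>m N + u * Y) * B = c \<cdot>\<^sub>m B + transpose_mat Y * (transpose_mat u * B)"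
    using u Y B by (simp add: add_mult_distrib_mat[of _ N N _ _ N] smult_one_left_mat)
  also have "\<dots> = c \<cdot>\<^sub>m B + B * (u * Y)"
    using u Y B by (simp add: uB assoc_mult_mat[symmetric, of "transpose_mat Y" N N B N u N] IH
      com[symmetric])
  also have "\<dots> = B * (c \<cdot>\<^sub>m 1\<^sub>m N + u * Y)"
    using u Y B by (simp add: mult_add_distrib_mat[of B N N _ N] smult_one_right_mat)
  finally show ?case unfolding Y_def by (simp add: mpoly_pCons[OF u])
qed



lemma transpose_mult_sq: "X \<in> carrier_mat n n \<Longrightarrow> Y \<in> carrier_mat n n \<Longrightarrow>
  transpose_mat (X * Y) = transpose_mat Y * transpose_mat (X :: 'a::comm_semiring_0 mat)"
  by (rule transpose_mult)

lemma assoc_sq: "X \<in> carrier_mat n n \<Longrightarrow> Y \<in> carrier_mat n n \<Longrightarrow> Z \<in> carrier_mat n n \<Longrightarrow>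
  X * Y * Z = X * (Y * (Z :: 'a::semiring_0 mat))"
  by (rule assoc_mult_mat)

lemma cancel_sq: "P * Q = 1\<^sub>m n \<Longrightarrow> P \<in> carrier_mat n n \<Longrightarrow> Q \<in> carrier_mat n n \<Longrightarrow>
   Z \<in> carrier_mat n n \<Longrightarrow> P * (Q * (Z :: 'a::semiring_1 mat)) = Z"
  by (rule cancel_mat)

lemma pow_kill:
  assumes u: "u \<in> carrier_mat n n" and ui: "ui \<in> carrier_mat n n" and uiu: "ui * u = 1\<^sub>m n"
  shows "Z \<in> carrier_mat n n \<Longrightarrow> u ^\<^sub>m m * Z = 0\<^sub>m n n \<Longrightarrow> Z = (0\<^sub>m n n :: 'a::semiring_1 mat)"
proof (induct m arbitrary: Z)
  case 0 thus ?case using u by simp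
next
  case (Suc m)
  have "u ^\<^sub>m m * (u * Z) = 0\<^sub>m n n"
    using Suc(3) u Suc(2) by (simp add: assoc_mult_mat[of _ n n _ n _ n])
  hence uZ: "u * Z = 0\<^sub>m n n" using Suc(1)[of "u * Z"] u Suc(2) by simp
  have "Z = ui * (u * Z)" using cancel_sq[OF uiu ui u Suc(2)] by simp
  thus ?case unfolding uZ using ui by simp
qed

lemma main_gen:
  fixes q :: "'k::{alg_closed_field, field_char_0}"
  assumes q: "q \<noteq> 0" and nr: "\<forall>m::nat. m > 0 \<longrightarrow> q ^ m \<noteq> 1"
    and B: "B \<in> carrier_mat N N" and dB: "det B \<noteq> 0"
    and eB: "transpose_mat B = e \<cdot>\<^sub>m B" and ee: "e * e = 1"
    and aI: "a \<in> isometry_group B" and bI: "b \<in> isometry_group B"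
    and qc: "q_conj_by q (GL N) a b"
  shows "q_conj_by q (isometry_group B) a b"
proof -
  let ?T = transpose_mat
  let ?s = "sigma_mat q"
  define Bc where "Bc = const_mat B"
  have dimB: "dim_row B = N" using B by simp
  have Bc: "Bc \<in> carrier_mat N N" unfolding Bc_def const_mat_def using B by simp
  have a: "a \<in> carrier_mat N N" and aiso: "?T a * Bc * a = Bc"
    using aI dimB unfolding isometry_group_def Bc_def by auto
  have b: "b \<in> carrier_mat N N" and biso: "?T b * Bc * b = Bc"
    using bI dimB unfolding isometry_group_def Bc_def by auto
  have dima: "dim_row a = N" using a by simp
  from qc obtain c d where cG: "c \<in> GL N" and d: "d \<in> carrier_mat N N"
    and scd: "?s c * d = 1\<^sub>m N" and dsc: "d * ?s c = 1\<^sub>m N" and bcad: "b = c * a * d"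
    unfolding q_conj_by_def dima by blast
  have c: "c \<in> carrier_mat N N" using cG unfolding GL_def by auto
  obtain ci where ci: "ci \<in> carrier_mat N N" and cci: "c * ci = 1\<^sub>m N" and cic: "ci * c = 1\<^sub>m N"
  proof -
    from cG obtain X where X1: "c * X = 1\<^sub>m (dim_row c)" and X2: "X * c = 1\<^sub>m (dim_row X)"
      unfolding GL_def invertible_mat_def inverts_mat_def by auto
    have "dim_col X = N" using arg_cong[OF X1, of dim_col] c by simp
    moreover have "dim_row X = N" using arg_cong[OF X2, of dim_col] c by simp
    ultimately have "X \<in> carrier_mat N N" by (intro carrier_matI)
    moreover have "c * X = 1\<^sub>m N" "X * c = 1\<^sub>m N" using X1 X2 c \<open>dim_row X = N\<close> by auto
    ultimately show ?thesis by (rule that)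
  qed
  define e' where "e' = fls_const e"
  have TBc: "?T Bc = e' \<cdot>\<^sub>m Bc"
  proof (rule eq_matI)
    fix i j assume "i < dim_row (e' \<cdot>\<^sub>m Bc)" "j < dim_col (e' \<cdot>\<^sub>m Bc)"
    hence ij: "i < N" "j < N" using Bc by auto
    have "B $$ (j, i) = e * B $$ (i, j)"
      using arg_cong[OF eB, of "\<lambda>M. M $$ (i,j)"] ij B by simp
    thus "?T Bc $$ (i, j) = (e' \<cdot>\<^sub>m Bc) $$ (i, j)"
      using ij B unfolding Bc_def const_mat_def e'_def by simp
  qed (use Bc in auto)
  have ee': "e' * e' = 1" unfolding e'_def by (simp add: ee)
  have dBc: "det Bc \<noteq> 0"
  proof -
    interpret comm_ring_hom "fls_const :: 'k \<Rightarrow> 'k fls" by (rule fls_const_hom)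
    have "det Bc = fls_const (det B)" unfolding Bc_def const_mat_def by simp
    moreover have "fls_const (det B) \<noteq> 0"
    proof
      assume "fls_const (det B) = 0"
      hence "fls_nth (fls_const (det B)) 0 = fls_nth 0 0" by simp
      thus False using dB by simp
    qed
    ultimately show ?thesis by simp
  qed
  obtain Bi where Bi: "Bi \<in> carrier_mat N N" and BBi: "Bc * Bi = 1\<^sub>m N" and BiB: "Bi * Bc = 1\<^sub>m N"
    using inv_exists[OF Bc dBc] by blast
  have sBi: "?s Bi = Bi"
  proof -
    have "Bc * ?s Bi = 1\<^sub>m N" using arg_cong[OF BBi, of ?s] sig_mult[OF q Bc Bi] by (simp add: Bc_def)
    hence "Bi * (Bc * ?s Bi) = Bi" using Bi by simp
    thus ?thesis using cancel_mat[OF BiB Bi Bc, of "?s Bi"] Bi by simp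
  qed
  have sBc: "?s Bc = Bc" by (simp add: Bc_def)
  note assocN = assoc_mult_mat[of _ N N _ N _ N]
  have sc: "?s c \<in> carrier_mat N N" using c by simp
  note cr = a b c d ci Bc Bi sc
  define x where "x = ?T c * Bc * c"
  have x: "x \<in> carrier_mat N N" unfolding x_def using cr by simp
  define Y where "Y = ?T a * x * a"
  have Y: "Y \<in> carrier_mat N N" unfolding Y_def using cr x by simp
  have Tb: "?T b = ?T d * (?T a * ?T c)"
    unfolding bcad using cr by (simp add: transpose_mult_sq[of _ N])
  have dYd: "?T d * Y * d = Bc"
  proof -
    have "?T d * Y * d = ?T b * Bc * b"
      unfolding Tb Y_def x_def using cr by (simp add: assocN bcad)
    thus ?thesis using biso by simp
  qed
  have sx: "?s x = ?T (?s c) * Bc * ?s c"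
    unfolding x_def using cr
    by (simp add: sig_mult[OF q, of _ N N _ N] sig_transpose sBc)
  have step1: "?s x = Y"
  proof -
    have "?s x = ?T (?s c) * (?T d * Y * d) * ?s c" unfolding sx dYd ..
    also have "\<dots> = ?T (d * ?s c) * Y * (d * ?s c)"
      using cr Y by (simp add: assocN transpose_mult_sq[of _ N])
    also have "\<dots> = Y" unfolding dsc using Y by simp
    finally show ?thesis .
  qed
  define ai where "ai = Bi * ?T a * Bc"
  have ai: "ai \<in> carrier_mat N N" unfolding ai_def using cr by simp
  have aia: "ai * a = 1\<^sub>m N"
  proof -
    have "ai * a = Bi * (?T a * Bc * a)" unfolding ai_def using cr by (simp add: assocN)
    thus ?thesis unfolding aiso BiB .
  qed
  have aai: "a * ai = 1\<^sub>m N" by (rule mat_mult_left_right_inverse[OF ai a aia])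
  have aBiTa: "a * (Bi * ?T a) = Bi"
  proof -
    have "a * (Bi * ?T a) = a * (Bi * ?T a) * (Bc * Bi)" unfolding BBi using cr by simp
    also have "\<dots> = (a * ai) * Bi" unfolding ai_def using cr by (simp add: assocN)
    finally show ?thesis unfolding aai using Bi by simp
  qed
  define u where "u = Bi * x"
  have u: "u \<in> carrier_mat N N" unfolding u_def using cr x by simp
  have ua: "u * a = a * ?s u"
  proof -
    have "a * ?s u = a * (Bi * (?T a * x * a))"
      unfolding u_def using cr x by (simp add: sig_mult[OF q Bi x] sBi step1 Y_def)
    also have "\<dots> = (a * (Bi * ?T a)) * x * a" using cr x by (simp add: assocN)
    finally show ?thesis unfolding aBiTa u_def using cr x by (simp add: assocN)
  qed
  have su: "?s u = ai * u * a"
  proof -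
    have "ai * u * a = ai * (a * ?s u)" using cr u ua ai by (simp add: assocN)
    also have "\<dots> = ?s u" using cancel_sq[OF aia ai a, of "?s u"] u by simp
    finally show ?thesis ..
  qed
  have "similar_mat (?s u) u"
    by (rule similar_matI[of _ _ ai a N]) (use ai a u aia aai su in auto)
  hence chi_s: "char_poly (?s u) = char_poly u" by (rule char_poly_similar)
  define chi where "chi = char_poly u"
  have chi_fix: "map_poly (sigma_q q) chi = chi"
  proof -
    interpret comm_ring_hom "sigma_q q" by (rule sigma_q_hom[OF q])
    show ?thesis using chi_s char_poly_hom[OF u] unfolding chi_def sigma_mat_def by simp
  qed
  define p0 where "p0 = map_poly (\<lambda>f. fls_nth f 0) chi"
  have chi_p0: "map_poly fls_const p0 = chi"
  proof (rule poly_eqI)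
    fix i
    have "sigma_q q (coeff chi i) = coeff chi i"
      using arg_cong[OF chi_fix, of "\<lambda>p. coeff p i"] by (simp add: coeff_map_poly)
    hence "coeff chi i = fls_const (fls_nth (coeff chi i) 0)" by (rule sigma_q_fixed[OF q nr])
    thus "coeff (map_poly fls_const p0) i = coeff chi i"
      unfolding p0_def by (simp add: coeff_map_poly)
  qed
  define xi where "xi = ci * Bi * ?T ci"
  have xi: "xi \<in> carrier_mat N N" unfolding xi_def using cr by simp
  have xxi: "x * xi = 1\<^sub>m N"
  proof -
    have "x * xi = ?T c * (Bc * (c * (ci * (Bi * ?T ci))))" unfolding x_def xi_def using cr by (simp add: assocN)
    also have "\<dots> = ?T c * ?T ci" using cr by (simp add: cancel_sq[OF cci c ci] cancel_sq[OF BBi Bc Bi])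
    also have "\<dots> = ?T (ci * c)" using cr by (simp add: transpose_mult_sq[of _ N])
    finally show ?thesis unfolding cic by simp
  qed
  define ui where "ui = xi * Bc"
  have ui: "ui \<in> carrier_mat N N" unfolding ui_def using xi Bc by simp
  have uui: "u * ui = 1\<^sub>m N"
  proof -
    have "u * ui = Bi * ((x * xi) * Bc)" unfolding u_def ui_def using cr x xi by (simp add: assocN)
    thus ?thesis unfolding xxi using cr BiB by simp
  qed
  have uiu: "ui * u = 1\<^sub>m N" by (rule mat_mult_left_right_inverse[OF u ui uui])
  have CH: "mpoly N chi u = 0\<^sub>m N N" unfolding chi_def by (rule cayley_hamilton[OF u])
  have chi0: "chi \<noteq> 0" using degree_monic_char_poly[OF u] unfolding chi_def by auto
  have p00: "p0 \<noteq> 0" using chi0 chi_p0 by auto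
  obtain p1 m where p0d: "p0 = [:0, 1:] ^ m * p1" and ndvd: "\<not> [:- 0, 1:] dvd p1"
    using order_decomp[OF p00, of 0] by auto
  have p10: "poly p1 0 \<noteq> 0" using ndvd by (simp add: poly_eq_0_iff_dvd)
  obtain r where "p1 dvd r^2 - [:0,1:]" using poly_sqrt[OF p10] by blast
  then obtain h where rh: "r^2 - [:0,1:] = p1 * h" by (auto elim: dvdE)
  hence rh': "r * r = [:0,1:] + p1 * h" by (simp add: power2_eq_square algebra_simps)
  interpret F: map_poly_comm_ring_hom "fls_const :: 'k \<Rightarrow> 'k fls"
    using fls_const_hom by (simp add: map_poly_comm_ring_hom_def)
  have FX: "map_poly fls_const [:0,1:] = ([:0,1:] :: 'k fls poly)" by simp
  have "mpoly N chi u = u ^\<^sub>m m * mpoly N (map_poly fls_const p1) u"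
    unfolding chi_p0[symmetric] p0d
    by (simp add: F.hom_mult F.hom_power mpoly_mult[OF u] mpoly_pow[OF u] mpoly_X[OF u] FX)
  hence "u ^\<^sub>m m * mpoly N (map_poly fls_const p1) u = 0\<^sub>m N N" using CH by simp
  hence P1: "mpoly N (map_poly fls_const p1) u = 0\<^sub>m N N"
    by (rule pow_kill[OF u ui uiu, rotated]) (use u in simp)
  define y where "y = mpoly N (map_poly fls_const r) u"
  have y: "y \<in> carrier_mat N N" unfolding y_def using u by simp
  have yy: "y * y = u"
  proof -
    have "y * y = mpoly N (map_poly fls_const (r * r)) u"
      unfolding y_def by (simp add: F.hom_mult mpoly_mult[OF u])
    also have "\<dots> = u + mpoly N (map_poly fls_const p1) u * mpoly N (map_poly fls_const h) u"
      unfolding rh' by (simp add: F.hom_mult F.hom_add mpoly_mult[OF u] mpoly_add[OF u] mpoly_X[OF u] FX)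
    finally show ?thesis unfolding P1 using u by simp
  qed
  have ya: "y * a = a * ?s y" unfolding y_def by (rule ypoly_sigma[OF q u a ua])
  have TBi: "?T Bi = e' \<cdot>\<^sub>m Bi"
  proof -
    have "?T Bi * ?T Bc = 1\<^sub>m N" using transpose_mult_sq[OF Bc Bi] BBi by simp
    hence "(e' \<cdot>\<^sub>m ?T Bi) * Bc = 1\<^sub>m N" unfolding TBc using cr
      by (simp add: mult_smult_distrib[of _ N N _ N] mult_smult_assoc_mat[of _ N N _ N])
    hence "(e' \<cdot>\<^sub>m ?T Bi) * (Bc * Bi) = Bi" using cr by (simp add: assocN[symmetric])
    hence "e' \<cdot>\<^sub>m ?T Bi = Bi" unfolding BBi using cr by simp
    hence "e' \<cdot>\<^sub>m (e' \<cdot>\<^sub>m ?T Bi) = e' \<cdot>\<^sub>m Bi" by simp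
    thus ?thesis by (simp add: smult_smult_mat ee')
  qed
  have Tx: "?T x = e' \<cdot>\<^sub>m x"
    unfolding x_def using cr
    by (simp add: transpose_mult_sq[of _ N] TBc mult_smult_distrib[of _ N N _ N] mult_smult_assoc_mat[of _ N N _ N] assocN)
  have Bcx: "Bc * u = x" unfolding u_def using cancel_sq[OF BBi Bc Bi x] .
  have uB: "?T u * Bc = Bc * u"
  proof -
    have "?T u * Bc = (e' * e') \<cdot>\<^sub>m (x * (Bi * Bc))" unfolding u_def using cr x
      by (simp add: transpose_mult_sq[of _ N] TBi Tx mult_smult_distrib[of _ N N _ N] mult_smult_assoc_mat[of _ N N _ N] assocN smult_smult_mat)
    thus ?thesis unfolding ee' BiB Bcx using x by simp
  qed
  have yB: "?T y * Bc = Bc * y" unfolding y_def by (rule ypoly_transpose[OF u Bc uB])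
  define yi where "yi = y * ui"
  have yi: "yi \<in> carrier_mat N N" unfolding yi_def using y ui by simp
  have yyi: "y * yi = 1\<^sub>m N" unfolding yi_def using y ui uui
    by (simp add: assocN[symmetric] yy)
  have yiy: "yi * y = 1\<^sub>m N" by (rule mat_mult_left_right_inverse[OF y yi yyi])
  define c' where "c' = c * yi"
  define d' where "d' = ?s y * d"
  have c': "c' \<in> carrier_mat N N" unfolding c'_def using c yi by simp
  have d': "d' \<in> carrier_mat N N" unfolding d'_def using y d by simp
  have sy: "?s y \<in> carrier_mat N N" "?s yi \<in> carrier_mat N N" using y yi by auto
  have iso: "?T c' * Bc * c' = Bc"
  proof -
    have "?T c' * Bc * c' = ?T yi * (?T c * Bc * c) * yi"
      unfolding c'_def using cr yi by (simp add: transpose_mult_sq[of _ N] assocN)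
    also have "\<dots> = ?T yi * (Bc * y) * (y * yi)"
      unfolding x_def[symmetric] Bcx[symmetric] yy[symmetric] using cr y yi by (simp add: assocN)
    also have "\<dots> = ?T yi * ?T y * Bc"
      unfolding yyi yB[symmetric] using cr y yi by (simp add: assocN)
    also have "?T yi * ?T y = ?T (y * yi)" using y yi by (simp add: transpose_mult_sq[of _ N])
    finally show ?thesis unfolding yyi using Bc by simp
  qed
  have e1: "?s c' * d' = 1\<^sub>m N"
  proof -
    have "?s c' * d' = ?s c * (?s (yi * y) * d)"
      unfolding c'_def d'_def using cr yi y sy by (simp add: sig_mult[OF q, of _ N N _ N] assocN)
    thus ?thesis unfolding yiy using scd d by simp
  qed
  have e2: "d' * ?s c' = 1\<^sub>m N"
  proof -
    have "d' * ?s c' = ?s y * ((d * ?s c) * ?s yi)"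
      unfolding c'_def d'_def using cr yi y sy by (simp add: sig_mult[OF q, of _ N N _ N] assocN)
    also have "\<dots> = ?s (y * yi)" unfolding dsc using sy by (simp add: sig_mult[OF q y yi])
    finally show ?thesis unfolding yyi by simp
  qed
  have e3: "b = c' * a * d'"
  proof -
    have "c' * a * d' = c * (yi * ((a * ?s y) * d))"
      unfolding c'_def d'_def using cr yi y sy by (simp add: assocN)
    also have "\<dots> = c * ((yi * y) * (a * d))"
      unfolding ya[symmetric] using cr yi y by (simp add: assocN)
    finally show ?thesis unfolding yiy bcad using cr by (simp add: assocN)
  qed
  show ?thesis unfolding q_conj_by_def isometry_group_def dima
    using c' d' iso e1 e2 e3 dimB by (auto simp: Bc_def)
qed


theorem mainTheorem14:
  fixes q :: "'k::{alg_closed_field, field_char_0}"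
  assumes "q \<noteq> 0" and "\<forall>m::nat. m > 0 \<longrightarrow> q ^ m \<noteq> 1"
  shows "(\<forall>(n::nat) (J::'k mat) a b. symplectic_form n J \<longrightarrow>
            a \<in> isometry_group J \<longrightarrow> b \<in> isometry_group J \<longrightarrow>
            q_conj_by q (GL (2*n)) a b \<longrightarrow> q_conj_by q (isometry_group J) a b)
       \<and> (\<forall>(n::nat) (S::'k mat) a b. symmetric_form n S \<longrightarrow>
            a \<in> isometry_group S \<longrightarrow> b \<in> isometry_group S \<longrightarrow>
            q_conj_by q (GL n) a b \<longrightarrow> q_conj_by q (isometry_group S) a b)"
proof (intro conjI allI impI)
  fix n :: nat and J :: "'k mat" and a b
  assume J: "symplectic_form n J" and a: "a \<in> isometry_group J" and b: "b \<in> isometry_group J"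
    and qc: "q_conj_by q (GL (2*n)) a b"
  have JC: "J \<in> carrier_mat (2*n) (2*n)" and TJ: "transpose_mat J = - J" and dJ: "det J \<noteq> 0"
    using J unfolding symplectic_form_def by auto
  have TJ': "transpose_mat J = (-1) \<cdot>\<^sub>m J" unfolding TJ by (rule eq_matI) auto
  show "q_conj_by q (isometry_group J) a b"
    by (rule main_gen[OF assms JC dJ TJ' _ a b qc]) simp
next
  fix n :: nat and S :: "'k mat" and a b
  assume S: "symmetric_form n S" and a: "a \<in> isometry_group S" and b: "b \<in> isometry_group S"
    and qc: "q_conj_by q (GL n) a b"
  have SC: "S \<in> carrier_mat n n" and TS: "transpose_mat S = S" and dS: "det S \<noteq> 0"
    using S unfolding symmetric_form_def by auto
  have TS': "transpose_mat S = 1 \<cdot>\<^sub>m S" unfolding TS by simp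
  show "q_conj_by q (isometry_group S) a b"
    by (rule main_gen[OF assms SC dS TS' _ a b qc]) simp
qed


end
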